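(* Consider the inexact proximal method described in the context, and assume $F'(x_i)\ne0$ for all iterates considered. Let $\varepsilon>0$ and $K\ge1$ be such that $F(x_k)-F^*\ge\varepsilon$ for $1\le k\le K$. Then for every $1\le k\le K$, $$F(\bar x_k)-F^*\le\frac{L_p\big(\|x_0-x^*\|+\sum_{i=1}^k\delta_i\big)^{p+1}}{k^{\frac{p+1}{2}}}\cdot\frac{(p+1)2^{p-2}V_k(\varepsilon)}{p!},$$ where $\bar x_k=\frac{\sum_{i=1}^ka_ix_i}{\sum_{i=1}^ka_i}$ and $V_k(\varepsilon)=\Big(\frac{\|F'(x_0)\|_*\big(\|x_0-x^*\|+\sum_{i=1}^k\delta_i\big)}{\varepsilon}\Big)^{\frac{p-1}{k}}$.
   Context: $\mathbb{E}$ is a finite-dimensional real vector space with dual $\mathbb{E}^*$; $B:\mathbb{E}\to\mathbb{E}^*$ is a fixed self-adjoint positive-definite operator, $\|x\|=\langle Bx,x\rangle^{1/2}$, $\|g\|_*=\langle g,B^{-1}g\rangle^{1/2}$. Let $p\ge 2$ be an integer, $h:\mathbb{E}\to\mathbb{R}\cup\{+\infty\}$ proper closed convex, and $f$ convex and $p$ times differentiable on an open convex set containing $\operatorname{dom}h$, with $\|D^pf(x)-D^pf(y)\|\le L_p\|x-y\|$ for $x,y\in\operatorname{dom}h$, $0<L_p<\infty$, where for a symmetric $p$-linear form $\|A\|=\max_{\|u\|\le1}|A[u]^p|$. $F=f+h$, attaining its minimum $F^*$ at $x^*\in\operatorname{dom}h$. Inexact proximal method: given $x_0\in\operatorname{dom}h$,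 a fixed subgradient $F'(x_0)\in\partial F(x_0)$, and accuracies $\delta_k\ge0$ ($k\ge1$). For $k\ge0$: set $a_{k+1}=\big(\frac{1}{2\|F'(x_k)\|_*}\big)^{\frac{p-1}{p}}\big(\frac{p!}{(p+1)L_p}\big)^{1/p}$ and $\Phi_{k+1}(x)=a_{k+1}F(x)+\frac12\|x-x_k\|^2$; find $x_{k+1}$ and $g_{k+1}\in\partial\Phi_{k+1}(x_{k+1})$ with $\|g_{k+1}\|_*\le\delta_{k+1}$, and set $F'(x_{k+1})=\frac{1}{a_{k+1}}(g_{k+1}-B(x_{k+1}-x_k))$. *)

theory Defs
  imports "HOL-Analysis.Analysis"
begin

text \<open>The space E is a euclidean_space type; E* is identified with E via the
inner product, so a linear functional g acts as x \<mapsto> g \<bullet> x.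
B : E \<rightarrow> E* is then a linear self-map of E.\<close>

definition Bnorm :: "('a::euclidean_space \<Rightarrow> 'a) \<Rightarrow> 'a \<Rightarrow> real" where
  "Bnorm B x = sqrt (B x \<bullet> x)"

definition Bdnorm :: "('a::euclidean_space \<Rightarrow> 'a) \<Rightarrow> 'a \<Rightarrow> real" where
  "Bdnorm B g = sqrt (g \<bullet> inv B g)"

definition selfadj_posdef :: "('a::euclidean_space \<Rightarrow> 'a) \<Rightarrow> bool" where
  "selfadj_posdef B \<longleftrightarrow> linear B \<and> (\<forall>x y. B x \<bullet> y = x \<bullet> B y) \<and> (\<forall>x. x \<noteq> 0 \<longrightarrow> B x \<bullet> x > 0)"

definition edom :: "('a \<Rightarrow> ereal) \<Rightarrow> 'a set" where
  "edom h = {x. h x \<noteq> \<infinity>}"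

definition proper_closed_convex :: "('a::euclidean_space \<Rightarrow> ereal) \<Rightarrow> bool" where
  "proper_closed_convex h \<longleftrightarrow>
     (\<forall>x. h x \<noteq> -\<infinity>) \<and> (\<exists>x. h x \<noteq> \<infinity>) \<and>
     (\<forall>x y t. 0 \<le> t \<and> t \<le> 1 \<longrightarrow>
        h ((1 - t) *\<^sub>R x + t *\<^sub>R y) \<le> ereal (1 - t) * h x + ereal t * h y) \<and>
     closed {(x, t::real). h x \<le> ereal t}"

definition subdiff :: "('a::euclidean_space \<Rightarrow> ereal) \<Rightarrow> 'a \<Rightarrow> 'a set" where
  "subdiff G x = {g. \<forall>y. G y \<ge> G x + ereal (g \<bullet> (y - x))}"

text \<open>f is p times (Frechet) differentiable on the open set U, with
  Df k x the k-th derivative at x, a k-linear form evaluated on a list of k vectors: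
  Df k x [u1,...,uk] = D^k f(x)[u1,...,uk].\<close>
definition has_derivs_upto ::
  "nat \<Rightarrow> ('a::real_normed_vector \<Rightarrow> real) \<Rightarrow> (nat \<Rightarrow> 'a \<Rightarrow> 'a list \<Rightarrow> real) \<Rightarrow> 'a set \<Rightarrow> bool" where
  "has_derivs_upto p f Df U \<longleftrightarrow>
     (\<forall>x\<in>U. Df 0 x [] = f x) \<and>
     (\<forall>k<p. \<forall>x\<in>U. \<forall>us. length us = k \<longrightarrow>
        ((\<lambda>y. Df k y us) has_derivative (\<lambda>v. Df (Suc k) x (v # us))) (at x))"

end

theory Submission
  imports Defs
begin


context
  fixes B :: "'a::euclidean_space \<Rightarrow> 'a"
  assumes B: "selfadj_posdef B"
begin

lemma B_linear: "linear B" using B by (simp add: selfadj_posdef_def)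
lemma B_sym: "B x \<bullet> y = B y \<bullet> x"
  using B unfolding selfadj_posdef_def by (metis inner_commute)
lemma B_nonneg: "B x \<bullet> x \<ge> 0"
proof (cases "x = 0")
  case True then show ?thesis using B unfolding selfadj_posdef_def by (simp add: linear_0)
next
  case False then show ?thesis using B unfolding selfadj_posdef_def by (meson less_imp_le)
qed
lemma B_pos: "x \<noteq> 0 \<Longrightarrow> B x \<bullet> x > 0"
  using B unfolding selfadj_posdef_def by blast
lemma B_zero: "B x \<bullet> x = 0 \<Longrightarrow> x = 0"
  using B_pos by force
lemma Bnorm_nonneg: "Bnorm B x \<ge> 0" using B_nonneg[of x] by (simp add: Bnorm_def)
lemma Bnorm_sq: "(Bnorm B x)^2 = B x \<bullet> x" by (simp add: Bnorm_def B_nonneg)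
lemma Bnorm_pos: "x \<noteq> 0 \<Longrightarrow> Bnorm B x > 0" by (simp add: Bnorm_def B_pos)
lemma B_add_l: "B (u + v) \<bullet> w = B u \<bullet> w + B v \<bullet> w"
  using B_linear by (simp add: linear_add inner_add_left)
lemma B_diff_l: "B (u - v) \<bullet> w = B u \<bullet> w - B v \<bullet> w"
  using B_linear by (simp add: linear_diff inner_diff_left)
lemma B_scale_l: "B (c *\<^sub>R u) \<bullet> w = c * (B u \<bullet> w)"
  using B_linear by (simp add: linear_scale)
lemma B_add_r: "B w \<bullet> (u + v) = B w \<bullet> u + B w \<bullet> v"
  by (simp add: inner_add_right)
lemma B_diff_r: "B w \<bullet> (u - v) = B w \<bullet> u - B w \<bullet> v"
  by (simp add: inner_diff_right)
lemma B_scale_r: "B w \<bullet> (c *\<^sub>R u) = c * (B w \<bullet> u)"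
  by simp

lemma B_expand: "B (u + v) \<bullet> (u + v) = B u \<bullet> u + 2 * (B u \<bullet> v) + B v \<bullet> v"
  using B_add_l B_add_r B_sym[of v u] by simp

lemma B_expand_diff: "B (u - v) \<bullet> (u - v) = B u \<bullet> u - 2 * (B u \<bullet> v) + B v \<bullet> v"
  using B_diff_l B_diff_r B_sym[of v u] by simp

lemma B_CS: "B x \<bullet> y \<le> Bnorm B x * Bnorm B y"
proof (cases "x = 0 \<or> y = 0")
  case True
  then show ?thesis using B_linear by (auto simp: linear_0 Bnorm_def)
next
  case False
  define nx where "nx = Bnorm B x"
  define ny where "ny = Bnorm B y"
  have nx: "nx > 0" "nx^2 = B x \<bullet> x" using False Bnorm_pos Bnorm_sq nx_def by auto
  have ny: "ny > 0" "ny^2 = B y \<bullet> y" using False Bnorm_pos Bnorm_sq ny_def by auto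
  have "0 \<le> B (ny *\<^sub>R x - nx *\<^sub>R y) \<bullet> (ny *\<^sub>R x - nx *\<^sub>R y)" by (rule B_nonneg)
  also have "\<dots> = ny^2 * (B x \<bullet> x) - 2 * nx * ny * (B x \<bullet> y) + nx^2 * (B y \<bullet> y)"
    unfolding B_expand_diff B_scale_l B_scale_r by (simp add: power2_eq_square)
  also have "\<dots> = ny^2 * nx^2 - 2 * nx * ny * (B x \<bullet> y) + nx^2 * ny^2"
    using nx(2) ny(2) by simp
  finally have "2 * (nx * ny) * (B x \<bullet> y) \<le> 2 * (nx * ny) * (nx * ny)"
    by (simp add: power2_eq_square algebra_simps)
  then have "B x \<bullet> y \<le> nx * ny" using nx ny by (simp add: mult_le_cancel_left_pos)
  then show ?thesis by (simp add: nx_def ny_def)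
qed

lemma Bnorm_triangle: "Bnorm B (u + v) \<le> Bnorm B u + Bnorm B v"
proof -
  have "(Bnorm B (u+v))^2 \<le> (Bnorm B u + Bnorm B v)^2"
    unfolding Bnorm_sq B_expand power2_sum using B_CS[of u v] by simp
  then show ?thesis using Bnorm_nonneg power2_le_imp_le by (metis add_nonneg_nonneg)
qed

lemma Bnorm_scale: "Bnorm B (c *\<^sub>R u) = \<bar>c\<bar> * Bnorm B u"
proof -
  have "B (c *\<^sub>R u) \<bullet> (c *\<^sub>R u) = c^2 * (B u \<bullet> u)"
    by (simp add: B_scale_l power2_eq_square)
  then show ?thesis by (simp add: Bnorm_def real_sqrt_mult)
qed

lemma B_inj: "inj B"
proof -
  have "B x = 0 \<Longrightarrow> x = 0" for x using B_pos[of x] by force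
  then show ?thesis using B_linear by (simp add: linear_injective_0)
qed

lemma B_bij: "bij B"
  using B_inj B_linear linear_injective_imp_surjective by (blast intro: bijI)

lemma B_inv: "B (inv B g) = g"
  using B_bij by (simp add: bij_is_surj surj_f_inv_f)

lemma Bdnorm_eq: "Bdnorm B g = Bnorm B (inv B g)"
  unfolding Bdnorm_def Bnorm_def B_inv by (simp add: inner_commute)

lemma dual_CS: "g \<bullet> y \<le> Bdnorm B g * Bnorm B y"
  using B_CS[of "inv B g" y] by (simp add: B_inv Bdnorm_eq)

end


lemma tele:
  fixes r \<delta> c :: "nat \<Rightarrow> real"
  assumes H: "\<And>i. 1 \<le> i \<Longrightarrow> i \<le> k \<Longrightarrow> c i + (r i)^2 \<le> (r (i-1) + \<delta> i)^2 \<and> r i \<le> r (i-1) + \<delta> i \<and> 0 \<le> r i \<and> 0 \<le> \<delta> i"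
  shows "m \<le> k \<Longrightarrow> 0 \<le> T \<Longrightarrow> (\<Sum>i=1..m. c i) + (r m + T)^2 \<le> (r 0 + (\<Sum>i=1..m. \<delta> i) + T)^2"
proof (induction m arbitrary: T)
  case 0
  then show ?case by simp
next
  case (Suc m)
  have h: "c (Suc m) + (r (Suc m))^2 \<le> (r m + \<delta> (Suc m))^2" "r (Suc m) \<le> r m + \<delta> (Suc m)"
    "0 \<le> r (Suc m)" "0 \<le> \<delta> (Suc m)"
    using H[of "Suc m"] Suc.prems by auto
  have a: "c (Suc m) + (r (Suc m) + T)^2 \<le> (r m + (\<delta> (Suc m) + T))^2"
  proof -
    have "T * r (Suc m) \<le> T * (r m + \<delta> (Suc m))" using h(2) Suc.prems(2) by (simp add: mult_left_mono)
    then show ?thesis using h(1) by (simp add: power2_sum algebra_simps)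
  qed
  have b: "(\<Sum>i=1..m. c i) + (r m + (\<delta> (Suc m) + T))^2 \<le> (r 0 + (\<Sum>i=1..m. \<delta> i) + (\<delta> (Suc m) + T))^2"
    using Suc.IH[of "\<delta> (Suc m) + T"] Suc.prems h(4) by simp
  show ?case using a b by (simp add: algebra_simps)
qed

lemma sumshift:
  fixes \<phi> :: "nat \<Rightarrow> real"
  shows "(\<Sum>i=1..k. \<phi> (i-1)) + \<phi> k = \<phi> 0 + (\<Sum>i=1..k. \<phi> i)"
  by (induction k) auto

lemma amgm_ln:
  fixes y :: "nat \<Rightarrow> real"
  assumes k: "k \<ge> 1" and y: "\<And>i. i \<in> {1..k} \<Longrightarrow> y i > 0"
  shows "(\<Sum>i=1..k. ln (y i)) \<le> real k * ln ((\<Sum>i=1..k. y i) / real k)"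
proof -
  define m where "m = (\<Sum>i=1..k. y i) / real k"
  have sp: "(\<Sum>i=1..k. y i) > 0" using k y by (intro sum_pos) auto
  have mpos: "m > 0" using sp k by (simp add: m_def)
  have "\<And>i. i \<in> {1..k} \<Longrightarrow> ln (y i) - ln m \<le> y i / m - 1"
  proof -
    fix i assume i: "i \<in> {1..k}"
    have "ln (y i / m) \<le> y i / m - 1" using y[OF i] mpos by (intro ln_le_minus_one) simp
    then show "ln (y i) - ln m \<le> y i / m - 1" using y[OF i] mpos by (simp add: ln_div)
  qed
  then have "(\<Sum>i=1..k. ln (y i) - ln m) \<le> (\<Sum>i=1..k. y i / m - 1)" by (rule sum_mono)
  also have "\<dots> = (\<Sum>i=1..k. y i) / m - real k" by (simp add: sum_subtractf sum_divide_distrib)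
  also have "\<dots> = 0" using k sp by (simp add: m_def)
  finally show ?thesis by (simp add: sum_subtractf m_def)
qed



lemma genEq: "\<And>P k M b c E a Q. ln M = b + (P + 1) / 2 * ln (real k) - c - (P - 1) / real k * E - (P - 1) / 2 * a \<Longrightarrow>
 (P - 1) / real k * E = - Q \<Longrightarrow> (P + 1) / 2 * ln (real k) = ln (real k) + (P - 1) / 2 * ln (real k) \<Longrightarrow>
 ln M = b + (ln (real k) + (P - 1) / 2 * ln (real k)) - c - (- Q) - (P - 1) / 2 * a"
  by simp

lemma final_alg:
  fixes a s G :: "nat \<Rightarrow> real" and k p :: nat and \<beta> \<epsilon> D Gsum :: real
  assumes k: "k \<ge> 1" and p: "p \<ge> 2" and \<beta>: "\<beta> > 0" and eps: "\<epsilon> > 0" and D: "D > 0"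
    and apos: "\<And>i. i \<in> {1..k} \<Longrightarrow> a i > 0" and spos: "\<And>i. i \<in> {1..k} \<Longrightarrow> s i > 0"
    and G0: "G 0 > 0" and Gi: "\<And>i. i \<in> {1..k} \<Longrightarrow> G i = s i / a i"
    and astep: "\<And>i. i \<in> {1..k} \<Longrightarrow> a i = (1 / (2 * G (i-1))) powr (real (p-1) / real p) * \<beta> powr (1 / real p)"
    and Gk: "G k \<ge> \<epsilon> / D"
    and Gs0: "Gsum \<ge> 0" and Gs: "2 * Gsum + (\<Sum>i=1..k. (s i)^2) \<le> D^2"
  shows "Gsum / (\<Sum>i=1..k. a i) \<le> D^(p+1) * 2^(p-2) * (G 0 * D / \<epsilon>) powr (real (p-1) / real k) / (\<beta> * real k powr ((real p + 1) / 2))"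
proof -
  define P where "P = real p"
  have P2: "P \<ge> 2" using p by (simp add: P_def)
  have rp1: "real (p-1) = P - 1" using p by (simp add: P_def of_nat_diff)
  have rp1': "real (p-1) = real p - 1" using p by (simp add: of_nat_diff)
  define q where "q = (P - 1) / P"
  define S where "S = (\<Sum>i=1..k. ln (a i))"
  define Ls where "Ls = (\<Sum>i=1..k. ln (s i))"
  define A where "A = (\<Sum>i=1..k. (s i)^2)"
  define SA where "SA = (\<Sum>i=1..k. a i)"
  have kpos: "real k > 0" using k by simp
  have Gpos: "G i > 0" if "i \<le> k" for i
  proof (cases "i = 0")
    case True then show ?thesis using G0 by simp
  next
    case False then have "i \<in> {1..k}" using that by auto
    then show ?thesis using Gi apos spos by simp
  qed
  have Apos: "A > 0" unfolding A_def
  proof (intro sum_pos)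
    fix i :: nat assume "i \<in> {1..k}" then have "s i > 0" by (rule spos)
    then show "(s i)^2 > 0" by simp
  qed (use k in auto)
  have SApos: "SA > 0" unfolding SA_def using k apos by (intro sum_pos) auto
  have la: "ln (a i) = q * (- ln 2 - ln (G (i-1))) + ln \<beta> / P" if i: "i \<in> {1..k}" for i
  proof -
    have g: "G (i-1) > 0" using i by (intro Gpos) auto
    have "ln (a i) = ln ((1 / (2 * G (i-1))) powr q) + ln (\<beta> powr (1 / P))"
      using astep[OF i, unfolded rp1'] g \<beta> by (simp add: ln_mult q_def P_def)
    also have "\<dots> = q * ln (1 / (2 * G (i-1))) + ln \<beta> / P" by simp
    also have "ln (1 / (2 * G (i-1))) = - ln 2 - ln (G (i-1))" using g by (simp add: ln_div ln_mult)
    finally show ?thesis .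
  qed
  have lG: "ln (G i) = ln (s i) - ln (a i)" if i: "i \<in> {1..k}" for i
    using Gi[OF i] apos[OF i] spos[OF i] by (simp add: ln_div)
  have S1: "S = real k * (ln \<beta> / P - q * ln 2) - q * (\<Sum>i=1..k. ln (G (i-1)))"
  proof -
    have "S = (\<Sum>i=1..k. (ln \<beta> / P - q * ln 2) - q * ln (G (i-1)))"
      unfolding S_def by (rule sum.cong) (auto simp: la algebra_simps)
    also have "\<dots> = real k * (ln \<beta> / P - q * ln 2) - q * (\<Sum>i=1..k. ln (G (i-1)))"
      by (simp add: sum_subtractf sum_distrib_left)
    finally show ?thesis .
  qed
  have S2: "(\<Sum>i=1..k. ln (G (i-1))) = ln (G 0) + (Ls - S) - ln (G k)"
  proof -
    have "(\<Sum>i=1..k. ln (G i)) = Ls - S"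
      unfolding Ls_def S_def by (simp add: lG sum_subtractf[symmetric])
    then show ?thesis using sumshift[of "\<lambda>i. ln (G i)" k] by simp
  qed
  have S3: "S = real k * ln \<beta> - real k * (P - 1) * ln 2 + (P - 1) * (ln (G k) - ln (G 0) - Ls)"
  proof -
    have "S = real k * (ln \<beta> / P - q * ln 2) - q * (ln (G 0) + (Ls - S) - ln (G k))"
      using S1 S2 by simp
    then have "P * S = P * (real k * (ln \<beta> / P - q * ln 2) - q * (ln (G 0) + (Ls - S) - ln (G k)))"
      by simp
    also have "\<dots> = real k * ln \<beta> - real k * (P - 1) * ln 2 - (P - 1) * (ln (G 0) + (Ls - S) - ln (G k))"
      using P2 by (simp add: q_def field_simps)
    finally have "P * S = real k * ln \<beta> - real k * (P - 1) * ln 2 - (P - 1) * (ln (G 0) + (Ls - S) - ln (G k))" .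
    then show ?thesis by (simp add: algebra_simps)
  qed
  have am1: "S \<le> real k * ln (SA / real k)"
    unfolding S_def SA_def using amgm_ln[of k a] k apos by simp
  have am2: "Ls \<le> real k / 2 * ln (A / real k)"
  proof -
    have "(\<Sum>i=1..k. ln ((s i)^2)) \<le> real k * ln (A / real k)"
      unfolding A_def using amgm_ln[of k "\<lambda>i. (s i)^2"] k spos by (simp add: less_imp_neq[symmetric] )
    moreover have "(\<Sum>i=1..k. ln ((s i)^2)) = 2 * Ls"
      unfolding Ls_def sum_distrib_left by (rule sum.cong) (auto simp: ln_realpow spos)
    ultimately show ?thesis by simp
  qed
  have lGk: "ln (G k) \<ge> ln \<epsilon> - ln D"
  proof -
    have "ln (\<epsilon> / D) \<le> ln (G k)" using Gk eps D Gpos[of k] by (subst ln_le_cancel_iff) auto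
    then show ?thesis using eps D by (simp add: ln_div)
  qed
  have c1: "(P - 1) * (ln \<epsilon> - ln D) \<le> (P - 1) * ln (G k)" using lGk P2 by (intro mult_left_mono) auto
  have c2: "(P - 1) * Ls \<le> (P - 1) * (real k / 2 * ln (A / real k))" using am2 P2 by (intro mult_left_mono) auto
  have c3: "real k * ln (SA / real k) \<ge> real k * ln \<beta> - real k * (P - 1) * ln 2 + (P - 1) * (ln \<epsilon> - ln D - ln (G 0)) - (P - 1) * (real k / 2 * ln (A / real k))"
    using S3 am1 c1 c2 by (simp add: field_simps)
  have c4: "ln (SA / real k) \<ge> ln \<beta> - (P - 1) * ln 2 + (P - 1) / real k * (ln \<epsilon> - ln D - ln (G 0)) - (P - 1) / 2 * ln (A / real k)"
  proof -
    have "real k * (ln \<beta> - (P - 1) * ln 2 + (P - 1) / real k * (ln \<epsilon> - ln D - ln (G 0)) - (P - 1) / 2 * ln (A / real k))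
       = real k * ln \<beta> - real k * (P - 1) * ln 2 + (P - 1) * (ln \<epsilon> - ln D - ln (G 0)) - (P - 1) * (real k / 2 * ln (A / real k))"
      using kpos by (simp add: field_simps)
    then show ?thesis using c3 kpos by (metis mult_le_cancel_left_pos)
  qed
  define V where "V = (G 0 * D / \<epsilon>) powr (real (p-1) / real k)"
  have Vpos: "V > 0" unfolding V_def using G0 D eps by simp
  define M where "M = \<beta> * real k powr ((P + 1) / 2) / (2^(p-1) * V * A powr ((P - 1) / 2))"
  have Mpos: "M > 0" unfolding M_def using \<beta> kpos Vpos Apos by simp
  have lnM: "ln M = ln \<beta> + (P + 1) / 2 * ln (real k) - (P - 1) * ln 2 - (P - 1) / real k * (ln (G 0) + ln D - ln \<epsilon>) - (P - 1) / 2 * ln A"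
  proof -
    have "ln M = ln \<beta> + ln (real k powr ((P + 1) / 2)) - (ln (2^(p-1)) + ln V + ln (A powr ((P - 1) / 2)))"
      unfolding M_def using \<beta> kpos Vpos Apos by (simp add: ln_div ln_mult)
    also have "ln (2^(p-1)::real) = (P - 1) * ln 2" using rp1 by (simp add: ln_realpow)
    also have "ln V = (P - 1) / real k * (ln (G 0) + ln D - ln \<epsilon>)"
      unfolding V_def rp1 using G0 D eps by (simp add: ln_mult ln_div)
    finally show ?thesis using kpos Apos by simp
  qed
  have "ln M \<le> ln SA"
  proof -
    have l1: "ln SA = ln (SA / real k) + ln (real k)" using SApos kpos by (simp add: ln_div)
    have l2: "ln (A / real k) = ln A - ln (real k)" using Apos kpos by (simp add: ln_div)
    have e1: "(P + 1) / 2 * ln (real k) = ln (real k) + (P - 1) / 2 * ln (real k)" by (simp add: field_simps)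
    have e2: "(P - 1) / real k * (ln (G 0) + ln D - ln \<epsilon>) = - ((P - 1) / real k * (ln \<epsilon> - ln D - ln (G 0)))"
      by (simp add: algebra_simps)
    have e3: "(P - 1) / 2 * (ln A - ln (real k)) = (P - 1) / 2 * ln A - (P - 1) / 2 * ln (real k)"
      by (rule right_diff_distrib)
    have gen: "\<And>b c T u a kk X M :: real. b - c + T - u * (a - kk) \<le> X \<Longrightarrow> M = b + kk + u * kk - c + T - u * a \<Longrightarrow> M \<le> X + kk"
    proof -
      fix b c T u a kk X M :: real
      assume h1: "b - c + T - u * (a - kk) \<le> X" and h2: "M = b + kk + u * kk - c + T - u * a"
      have "u * (a - kk) = u * a - u * kk" by (rule right_diff_distrib)
      then show "M \<le> X + kk" using h1 h2 by linarith
    qed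
    have m1: "ln M = ln \<beta> + ln (real k) + (P - 1) / 2 * ln (real k) - (P - 1) * ln 2 + (P - 1) / real k * (ln \<epsilon> - ln D - ln (G 0)) - (P - 1) / 2 * ln A"
    proof -
      have eqn: "ln M = ln \<beta> + (ln (real k) + (P - 1) / 2 * ln (real k)) - (P - 1) * ln 2 - (- ((P - 1) / real k * (ln \<epsilon> - ln D - ln (G 0)))) - (P - 1) / 2 * ln A"
        by (rule genEq[OF lnM e2 e1])
      have aux: "\<And>M b kk w c T v :: real. M = b + (kk + w) - c - (- T) - v \<Longrightarrow> M = b + kk + w - c + T - v" by (simp only: diff_minus_eq_add add.assoc)
      show ?thesis by (rule aux[OF eqn])
    qed
    have "ln M \<le> ln (SA / real k) + ln (real k)"
      by (rule gen[OF c4[unfolded l2] m1])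
    then show ?thesis using l1 by simp
  qed
  then have MSA: "M \<le> SA" using Mpos SApos by (subst (asm) ln_le_cancel_iff) auto
  have AD: "A powr ((P - 1) / 2) \<le> D^(p-1)"
  proof -
    have "A \<le> D^2" using Gs Gs0 unfolding A_def by simp
    then have "A powr ((P - 1) / 2) \<le> (D^2) powr ((P - 1) / 2)" using Apos P2 by (intro powr_mono2) auto
    also have "(D^2) powr ((P - 1) / 2) = D powr (P - 1)"
    proof -
      have "D^2 = D powr 2" using D by (simp add: powr_numeral)
      then have "(D^2) powr ((P - 1) / 2) = D powr (2 * ((P - 1) / 2))" by (simp add: powr_powr)
      moreover have "2 * ((P - 1) / 2) = P - 1" by simp
      ultimately show ?thesis by metis
    qed
    also have "\<dots> = D^(p-1)" unfolding rp1[symmetric] using D by (simp add: powr_realpow)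
    finally show ?thesis .
  qed
  have key: "2 * Gsum * A powr ((P - 1) / 2) \<le> D^(p+1)"
  proof -
    have "2 * Gsum \<le> D^2" using Gs Apos unfolding A_def by simp
    then have "2 * Gsum * A powr ((P - 1) / 2) \<le> D^2 * D^(p-1)"
      using AD Gs0 by (intro mult_mono) auto
    also have "\<dots> = D^(p+1)"
    proof -
      have "2 + (p - 1) = p + 1" using p by simp
      then show ?thesis by (metis power_add)
    qed
    finally show ?thesis .
  qed
  have "Gsum / SA \<le> Gsum / M" using MSA Mpos Gs0 by (intro divide_left_mono) auto
  also have "Gsum / M = (2 * Gsum * A powr ((P - 1) / 2)) * 2^(p-2) * V / (\<beta> * real k powr ((P + 1) / 2))"
  proof -
    have pp: "p - 1 = Suc (p - 2)" using p by simp
    have "(2::real)^(p-1) = 2 * 2^(p-2)" unfolding pp by simp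
    then show ?thesis unfolding M_def using \<beta> kpos Vpos Apos by (simp add: divide_simps)
  qed
  also have "\<dots> \<le> D^(p+1) * 2^(p-2) * V / (\<beta> * real k powr ((P + 1) / 2))"
    using key \<beta> kpos Vpos by (intro divide_right_mono mult_right_mono) auto
  finally show ?thesis unfolding SA_def V_def P_def by simp
qed



lemma conv_h:
  fixes h :: "'a::euclidean_space \<Rightarrow> ereal"
  assumes h: "proper_closed_convex h"
  shows "convex (edom h)" "convex_on (edom h) (\<lambda>y. real_of_ereal (h y))"
proof -
  have ninf: "h x \<noteq> -\<infinity>" for x using h by (simp add: proper_closed_convex_def)
  have hc: "h ((1 - t) *\<^sub>R x + t *\<^sub>R y) \<le> ereal (1 - t) * h x + ereal t * h y" if "0 \<le> t" "t \<le> 1" for x y t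
    using h that by (simp add: proper_closed_convex_def)
  have main: "(1 - t) *\<^sub>R x + t *\<^sub>R y \<in> edom h \<and>
      real_of_ereal (h ((1 - t) *\<^sub>R x + t *\<^sub>R y)) \<le> (1 - t) * real_of_ereal (h x) + t * real_of_ereal (h y)"
    if x: "x \<in> edom h" and y: "y \<in> edom h" and t: "0 \<le> t" "t \<le> 1" for x y t
  proof -
    have ex: "h x = ereal (real_of_ereal (h x))" using x ninf[of x] by (cases "h x") (auto simp: edom_def)
    have ey: "h y = ereal (real_of_ereal (h y))" using y ninf[of y] by (cases "h y") (auto simp: edom_def)
    have le: "h ((1 - t) *\<^sub>R x + t *\<^sub>R y) \<le> ereal ((1 - t) * real_of_ereal (h x) + t * real_of_ereal (h y))"
      using hc[OF t] ex ey by (metis plus_ereal.simps(1) times_ereal.simps(1))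
    then have fin: "h ((1 - t) *\<^sub>R x + t *\<^sub>R y) \<noteq> \<infinity>" by auto
    have e2: "h ((1 - t) *\<^sub>R x + t *\<^sub>R y) = ereal (real_of_ereal (h ((1 - t) *\<^sub>R x + t *\<^sub>R y)))"
      using fin ninf by (cases "h ((1 - t) *\<^sub>R x + t *\<^sub>R y)") auto
    show ?thesis using fin le e2 by (auto simp: edom_def) (metis ereal_less_eq(3))
  qed
  show cv: "convex (edom h)"
  proof (rule convexI)
    fix x y u v :: real
    fix x y assume "x \<in> edom h" "y \<in> edom h"
    then show "u *\<^sub>R x + v *\<^sub>R y \<in> edom h" if "0 \<le> u" "0 \<le> v" "u + v = 1" for u v
      using main[of x y v] that by (simp add: eq_diff_eq[symmetric])
  qed
  show "convex_on (edom h) (\<lambda>y. real_of_ereal (h y))"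
    unfolding convex_on_def
  proof (intro conjI cv ballI allI impI)
    fix x y u v assume "x \<in> edom h" "y \<in> edom h" "0 \<le> (u::real)" "0 \<le> (v::real)" "u + v = 1"
    then show "real_of_ereal (h (u *\<^sub>R x + v *\<^sub>R y)) \<le> u * real_of_ereal (h x) + v * real_of_ereal (h y)"
      using main[of x y v] by (simp add: eq_diff_eq[symmetric])
  qed
qed

context
  fixes B :: "'a::euclidean_space \<Rightarrow> 'a"
  assumes B: "selfadj_posdef B"
begin

lemma subgrad_real:
  fixes Fr :: "'a \<Rightarrow> real"
  assumes a: "a > 0" and cv: "convex_on S Fr" and x: "x \<in> S" and y: "y \<in> S"
    and H: "\<And>t. 0 < t \<Longrightarrow> t \<le> 1 \<Longrightarrow>
      a * Fr ((1 - t) *\<^sub>R x + t *\<^sub>R y) + (Bnorm B ((1 - t) *\<^sub>R x + t *\<^sub>R y - z))^2 / 2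
      \<ge> a * Fr x + (Bnorm B (x - z))^2 / 2 + g \<bullet> ((1 - t) *\<^sub>R x + t *\<^sub>R y - x)"
  shows "a * (Fr y - Fr x) \<ge> (g - B (x - z)) \<bullet> (y - x)"
proof -
  define d where "d = y - x"
  define \<Delta> where "\<Delta> = a * (Fr y - Fr x) + B (x - z) \<bullet> d - g \<bullet> d"
  define N where "N = B d \<bullet> d"
  have N0: "N \<ge> 0" unfolding N_def using B_nonneg[OF B] .
  have ineq: "\<Delta> + t * N / 2 \<ge> 0" if t: "0 < t" "t \<le> 1" for t
  proof -
    have w: "(1 - t) *\<^sub>R x + t *\<^sub>R y = x + t *\<^sub>R d" by (simp add: d_def algebra_simps)
    have q: "(Bnorm B (x + t *\<^sub>R d - z))^2 = (Bnorm B (x - z))^2 + 2 * t * (B (x - z) \<bullet> d) + t^2 * N"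
    proof -
      have "x + t *\<^sub>R d - z = (x - z) + t *\<^sub>R d" by simp
      then show ?thesis unfolding Bnorm_sq[OF B] N_def
        by (simp only: B_expand[OF B] B_scale_l[OF B] B_scale_r) (simp add: power2_eq_square)
    qed
    have c: "Fr (x + t *\<^sub>R d) \<le> (1 - t) * Fr x + t * Fr y"
      using convex_onD[OF cv, of t x y] t x y w by simp
    have "a * Fr x + (Bnorm B (x - z))^2 / 2 + t * (g \<bullet> d)
        \<le> a * Fr (x + t *\<^sub>R d) + (Bnorm B (x + t *\<^sub>R d - z))^2 / 2"
      using H[OF t] w by (simp add: inner_scaleR_right)
    also have "\<dots> \<le> a * ((1 - t) * Fr x + t * Fr y) + (Bnorm B (x + t *\<^sub>R d - z))^2 / 2"
      using c a by simp
    finally have "0 \<le> t * (a * (Fr y - Fr x) + B (x - z) \<bullet> d - g \<bullet> d + t * N / 2)"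
      unfolding q by (simp add: algebra_simps power2_eq_square add_divide_distrib)
    then show ?thesis using t by (simp add: \<Delta>_def zero_le_mult_iff)
  qed
  have "\<Delta> \<ge> 0"
  proof (rule ccontr)
    assume "\<not> \<Delta> \<ge> 0"
    then have neg: "\<Delta> < 0" by simp
    define t where "t = min 1 (- \<Delta> / (N + 1))"
    have t0: "0 < t" "t \<le> 1" using neg N0 by (auto simp: t_def divide_neg_pos)
    have "t * N \<le> (- \<Delta> / (N + 1)) * N" using N0 by (intro mult_right_mono) (auto simp: t_def)
    also have "\<dots> < - \<Delta> * 2"
    proof -
      have "N / (N + 1) < 2" using N0 by (simp add: divide_less_eq)
      then have "(- \<Delta>) * (N / (N + 1)) < (- \<Delta>) * 2" using neg by (intro mult_strict_left_mono) auto
      then show ?thesis by simp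
    qed
    finally have "\<Delta> + t * N / 2 < 0" by simp
    then show False using ineq[OF t0] by simp
  qed
  then show ?thesis by (simp add: \<Delta>_def d_def inner_diff_left)
qed

end

theorem lemma3:
  fixes B :: "'a::euclidean_space \<Rightarrow> 'a"
    and f :: "'a \<Rightarrow> real" and h :: "'a \<Rightarrow> ereal"
    and U :: "'a set" and Df :: "nat \<Rightarrow> 'a \<Rightarrow> 'a list \<Rightarrow> real"
    and p :: nat and L :: real
    and xs :: 'a
    and x :: "nat \<Rightarrow> 'a" and Fp :: "nat \<Rightarrow> 'a" and g :: "nat \<Rightarrow> 'a"
    and a :: "nat \<Rightarrow> real" and \<delta> :: "nat \<Rightarrow> real"
    and \<epsilon> :: real and K :: nat
  defines "F \<equiv> (\<lambda>y. ereal (f y) + h y)"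
  assumes B: "selfadj_posdef B"
    and p: "p \<ge> 2"
    and h: "proper_closed_convex h"
    and U: "open U" "convex U" "edom h \<subseteq> U"
    and fconv: "convex_on U f"
    and fdiff: "has_derivs_upto p f Df U"
    and Lpos: "0 < L"
    and Lip: "\<forall>y\<in>edom h. \<forall>z\<in>edom h. \<forall>u. Bnorm B u \<le> 1 \<longrightarrow>
               \<bar>Df p y (replicate p u) - Df p z (replicate p u)\<bar> \<le> L * Bnorm B (y - z)"
    and xs: "xs \<in> edom h" "\<forall>y. F xs \<le> F y"
    and x0: "x 0 \<in> edom h" "Fp 0 \<in> subdiff F (x 0)"
    and \<delta>: "\<forall>k\<ge>1. \<delta> k \<ge> 0"
    and step_a: "\<forall>k<K. a (Suc k) =
        (1 / (2 * Bdnorm B (Fp k))) powr (real (p - 1) / real p)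
        * (fact p / ((real p + 1) * L)) powr (1 / real p)"
    and step_g: "\<forall>k<K. g (Suc k) \<in> subdiff
        (\<lambda>y. ereal (a (Suc k)) * F y + ereal (Bnorm B (y - x k) ^ 2 / 2)) (x (Suc k))"
    and step_\<delta>: "\<forall>k<K. Bdnorm B (g (Suc k)) \<le> \<delta> (Suc k)"
    and step_F: "\<forall>k<K. Fp (Suc k) = (1 / a (Suc k)) *\<^sub>R (g (Suc k) - B (x (Suc k) - x k))"
    and nonzero: "\<forall>i<K. Fp i \<noteq> 0"
    and eps: "\<epsilon> > 0" and K: "K \<ge> 1"
    and gap: "\<forall>k. 1 \<le> k \<and> k \<le> K \<longrightarrow> F (x k) - F xs \<ge> ereal \<epsilon>"
  shows "\<forall>k. 1 \<le> k \<and> k \<le> K \<longrightarrow>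
     (let D = Bnorm B (x 0 - xs) + (\<Sum>i=1..k. \<delta> i);
          V = (Bdnorm B (Fp 0) * D / \<epsilon>) powr (real (p - 1) / real k);
          xbar = (1 / (\<Sum>i=1..k. a i)) *\<^sub>R (\<Sum>i=1..k. a i *\<^sub>R x i)
      in F xbar - F xs \<le>
         ereal (L * D ^ (p + 1) / real k powr ((real p + 1) / 2)
                * ((real p + 1) * 2 ^ (p - 2) * V / fact p)))"
proof (intro allI impI)
  fix k assume kk: "1 \<le> k \<and> k \<le> K"
  define hr where "hr y = real_of_ereal (h y)" for y
  define Fr where "Fr y = f y + hr y" for y
  have hninf: "h y \<noteq> -\<infinity>" for y using h by (simp add: proper_closed_convex_def)
  have h_eq: "h y = ereal (hr y)" if "y \<in> edom h" for y
    using that hninf[of y] by (cases "h y") (auto simp: edom_def hr_def)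
  have Fr_eq: "F y = ereal (Fr y)" if "y \<in> edom h" for y
    using h_eq[OF that] by (simp add: F_def Fr_def)
  have F_inf: "F y = \<infinity>" if "y \<notin> edom h" for y
    using that by (simp add: F_def edom_def)
  have cvS: "convex (edom h)" using conv_h[OF h] by simp
  have cvh: "convex_on (edom h) hr" using conv_h(2)[OF h] unfolding hr_def[abs_def] .
  have cvf: "convex_on (edom h) f" using convex_on_subset[OF fconv U(3) cvS] .
  have cvFr: "convex_on (edom h) Fr" unfolding Fr_def using cvf cvh by (rule convex_on_add)
  have Bd_pos: "Bdnorm B w > 0" if "w \<noteq> 0" for w
  proof -
    have "inv B w \<noteq> 0"
    proof
      assume "inv B w = 0"
      then have "B (inv B w) = 0" using B_linear[OF B] by (simp add: linear_0)
      then show False using that B_inv[OF B] by simp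
    qed
    then show ?thesis using Bnorm_pos[OF B] Bdnorm_eq[OF B] by simp
  qed
  have \<beta>pos: "fact p / ((real p + 1) * L) > 0" using Lpos by simp
  have apos: "a (Suc j) > 0" if "j < K" for j
  proof -
    have "Bdnorm B (Fp j) > 0" using Bd_pos nonzero that by simp
    then have "(1 / (2 * Bdnorm B (Fp j))) powr (real (p - 1) / real p) > 0" by simp
    moreover have "(fact p / ((real p + 1) * L)) powr (1 / real p) > 0" using \<beta>pos Lpos by simp
    ultimately show ?thesis using step_a that by simp
  qed
  define \<Phi> where "\<Phi> j y = ereal (a (Suc j)) * F y + ereal (Bnorm B (y - x j) ^ 2 / 2)" for j y
  have Phi_eq: "\<Phi> j y = ereal (a (Suc j) * Fr y + Bnorm B (y - x j) ^ 2 / 2)" if "y \<in> edom h" for j y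
    using Fr_eq[OF that] by (simp add: \<Phi>_def)
  have sub: "\<Phi> j y \<ge> \<Phi> j (x (Suc j)) + ereal (g (Suc j) \<bullet> (y - x (Suc j)))" if "j < K" for j y
    using step_g that by (simp add: subdiff_def \<Phi>_def)
  have xdom: "x (Suc j) \<in> edom h" if j: "j < K" for j
  proof (rule ccontr)
    assume nd: "x (Suc j) \<notin> edom h"
    have "\<Phi> j (x (Suc j)) = \<infinity>" using F_inf[OF nd] apos[OF j] by (simp add: \<Phi>_def)
    then have "\<Phi> j xs = \<infinity>" using sub[OF j, of xs] by simp
    then show False using Phi_eq[OF xs(1), of j] by simp
  qed
  define v where "v j = inv B (g (Suc j)) + x j - x (Suc j)" for j
  have Bv: "B (v j) = g (Suc j) - B (x (Suc j) - x j)" for j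
    using B_linear[OF B] B_inv[OF B] by (simp add: v_def linear_add linear_diff algebra_simps)
  have subg: "a (Suc j) * (Fr xs - Fr (x (Suc j))) \<ge> B (v j) \<bullet> (xs - x (Suc j))" if j: "j < K" for j
  proof -
    have "a (Suc j) * (Fr xs - Fr (x (Suc j))) \<ge> (g (Suc j) - B (x (Suc j) - x j)) \<bullet> (xs - x (Suc j))"
    proof (rule subgrad_real[OF B apos[OF j] cvFr xdom[OF j] xs(1)])
      fix t :: real assume t: "0 < t" "t \<le> 1"
      let ?w = "(1 - t) *\<^sub>R x (Suc j) + t *\<^sub>R xs"
      have wd: "?w \<in> edom h" using convexD[OF cvS xdom[OF j] xs(1), of "1 - t" t] t by simp
      have "\<Phi> j ?w \<ge> \<Phi> j (x (Suc j)) + ereal (g (Suc j) \<bullet> (?w - x (Suc j)))" by (rule sub[OF j])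
      then show "a (Suc j) * Fr ?w + (Bnorm B (?w - x j))^2 / 2
          \<ge> a (Suc j) * Fr (x (Suc j)) + (Bnorm B (x (Suc j) - x j))^2 / 2 + g (Suc j) \<bullet> (?w - x (Suc j))"
        unfolding Phi_eq[OF wd] Phi_eq[OF xdom[OF j]] by simp
    qed
    then show ?thesis by (simp add: Bv)
  qed
  have Fp_eq: "Bdnorm B (Fp (Suc j)) = Bnorm B (v j) / a (Suc j)" if j: "j < K" for j
  proof -
    have "Fp (Suc j) = B ((1 / a (Suc j)) *\<^sub>R v j)"
      using step_F j B_linear[OF B] by (simp add: Bv linear_scale)
    then have "inv B (Fp (Suc j)) = (1 / a (Suc j)) *\<^sub>R v j"
      using B_inj[OF B] by (simp add: inv_f_f)
    then show ?thesis using apos[OF j] by (simp add: Bdnorm_eq[OF B] Bnorm_scale[OF B])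
  qed
  define r where "r i = Bnorm B (x i - xs)" for i
  define s where "s i = Bnorm B (v (i - 1))" for i
  define gp where "gp i = Fr (x i) - Fr xs" for i
  have gpe: "gp i \<ge> \<epsilon>" if "1 \<le> i" "i \<le> K" for i
  proof -
    have i: "x i \<in> edom h" using xdom[of "i - 1"] that by simp
    have "F (x i) - F xs \<ge> ereal \<epsilon>" using gap that by simp
    then show ?thesis using Fr_eq[OF i] Fr_eq[OF xs(1)] by (simp add: gp_def)
  qed
  have kK: "k \<le> K" "1 \<le> k" using kk by auto
  have P1: "2 * (a i * gp i) + (s i)^2 + (r i)^2 \<le> (r (i-1) + \<delta> i)^2 \<and> r i \<le> r (i-1) + \<delta> i \<and> 0 \<le> r i \<and> 0 \<le> \<delta> i
            \<and> a i * gp i \<le> s i * r i \<and> 0 < a i \<and> \<epsilon> \<le> gp i"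
    if i: "1 \<le> i" "i \<le> k" for i
  proof -
    obtain j where ij: "i = Suc j" using i by (cases i) auto
    have j: "j < K" using ij i kK by simp
    have ap: "a i > 0" using apos[OF j] ij by simp
    have ge: "\<epsilon> \<le> gp i" using gpe[of i] i kK by simp
    define e where "e = x i - xs"
    have ve: "v j + e = inv B (g i) + (x j - xs)" by (simp add: v_def e_def ij)
    have n1: "Bnorm B (v j + e) \<le> \<delta> i + r j"
    proof -
      have "Bnorm B (v j + e) \<le> Bnorm B (inv B (g i)) + Bnorm B (x j - xs)"
        unfolding ve by (rule Bnorm_triangle[OF B])
      moreover have "Bnorm B (inv B (g i)) \<le> \<delta> i" using step_\<delta> j ij Bdnorm_eq[OF B] by simp
      ultimately show ?thesis by (simp add: r_def)
    qed
    have dpos: "0 \<le> \<delta> i" using \<delta> i by simp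
    have sq: "(Bnorm B (v j + e))^2 = (s i)^2 + 2 * (B (v j) \<bullet> e) + (r i)^2"
      unfolding Bnorm_sq[OF B] s_def r_def e_def B_expand[OF B] using ij by simp
    have ag: "a i * gp i \<le> B (v j) \<bullet> e"
    proof -
      have "B (v j) \<bullet> (xs - x i) = - (B (v j) \<bullet> e)" by (simp add: e_def inner_diff_right)
      then show ?thesis using subg[OF j] ij by (simp add: gp_def algebra_simps)
    qed
    have cs: "B (v j) \<bullet> e \<le> s i * r i" using B_CS[OF B, of "v j" e] by (simp add: s_def r_def e_def ij)
    have "(Bnorm B (v j + e))^2 \<le> (\<delta> i + r j)^2"
      by (rule power_mono[OF n1]) (simp add: Bnorm_nonneg[OF B])
    then have m: "2 * (a i * gp i) + (s i)^2 + (r i)^2 \<le> (r (i-1) + \<delta> i)^2"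
      using sq ag ij by (simp add: algebra_simps)
    have ri0: "0 \<le> r i" by (simp add: r_def Bnorm_nonneg[OF B])
    have rj0: "0 \<le> r (i - 1)" by (simp add: r_def Bnorm_nonneg[OF B])
    have "0 \<le> 2 * (a i * gp i) + (s i)^2" using ap ge eps by simp
    then have "(r i)^2 \<le> (r (i-1) + \<delta> i)^2" using m by simp
    then have "r i \<le> r (i-1) + \<delta> i" by (rule power2_le_imp_le) (use rj0 dpos in simp)
    then show ?thesis using m ri0 dpos ag cs ap ge by simp
  qed
  define c where "c i = 2 * (a i * gp i) + (s i)^2" for i
  have tl: "(\<Sum>i=1..k. c i) + (r k + 0)^2 \<le> (r 0 + (\<Sum>i=1..k. \<delta> i) + 0)^2"
    by (rule tele[of k c r \<delta> k 0]) (use P1 in \<open>auto simp: c_def\<close>)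
  define D where "D = r 0 + (\<Sum>i=1..k. \<delta> i)"
  define Gsum where "Gsum = (\<Sum>i=1..k. a i * gp i)"
  define SA where "SA = (\<Sum>i=1..k. a i)"
  have agp0: "0 \<le> a i * gp i" if "i \<in> {1..k}" for i
  proof -
    have "0 < a i" "\<epsilon> \<le> gp i" using P1[of i] that by auto
    then show ?thesis using eps by simp
  qed
  have Gsum0: "Gsum \<ge> 0" unfolding Gsum_def using agp0 by (intro sum_nonneg) auto
  have sumc: "(\<Sum>i=1..k. c i) = 2 * Gsum + (\<Sum>i=1..k. (s i)^2)"
    by (simp add: c_def Gsum_def sum.distrib sum_distrib_left)
  have tl2: "(\<Sum>i=1..k. c i) + (r k)^2 \<le> D^2" using tl by (simp add: D_def)
  have Gs: "2 * Gsum + (\<Sum>i=1..k. (s i)^2) \<le> D^2" using tl2 sumc zero_le_power2[of "r k"] by linarith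
  have rs_pos: "0 < s i \<and> 0 < r i" if "1 \<le> i" "i \<le> k" for i
  proof -
    have h1: "a i * gp i \<le> s i * r i" "0 < a i" "\<epsilon> \<le> gp i" using P1[OF that] by auto
    then have "0 < a i * gp i" using eps by simp
    then have "0 < s i * r i" using h1 by linarith
    moreover have "0 \<le> s i" "0 \<le> r i" by (simp_all add: s_def r_def Bnorm_nonneg[OF B])
    ultimately show ?thesis by (simp add: zero_less_mult_iff)
  qed
  have D0: "0 \<le> D" unfolding D_def using \<delta> by (auto simp: r_def Bnorm_nonneg[OF B] intro!: add_nonneg_nonneg sum_nonneg)
  have sumc0: "0 \<le> (\<Sum>i=1..k. c i)" unfolding c_def using agp0 by (intro sum_nonneg) auto
  have rkD: "r k \<le> D"
  proof -
    have "(r k)^2 \<le> D^2" using tl2 sumc0 by linarith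
    then show ?thesis by (rule power2_le_imp_le) (use D0 in simp)
  qed
  have Dpos: "D > 0" using rkD rs_pos[of k] kK by simp
  define G where "G i = Bdnorm B (Fp i)" for i
  have Gi: "G i = s i / a i" if iin: "i \<in> {1..k}" for i
  proof -
    obtain j where ij: "i = Suc j" using iin by (cases i) auto
    have j: "j < K" using ij iin kK by simp
    show ?thesis using Fp_eq[OF j] by (simp add: G_def s_def ij)
  qed
  have Gk: "G k \<ge> \<epsilon> / D"
  proof -
    have h1: "a k * gp k \<le> s k * r k" "0 < a k" "\<epsilon> \<le> gp k" using P1[of k] kK by auto
    have "gp k \<le> s k * r k / a k" using h1 by (simp add: pos_le_divide_eq mult.commute)
    then have "\<epsilon> \<le> s k * r k / a k" using h1 by linarith
    also have "\<dots> = G k * r k" using Gi[of k] kK by simp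
    also have "\<dots> \<le> G k * D" using rkD Gi[of k] kK rs_pos[of k] h1 by (intro mult_left_mono) auto
    finally show ?thesis using Dpos by (simp add: divide_le_eq mult.commute)
  qed
  have G0: "G 0 > 0" unfolding G_def using Bd_pos nonzero kK by simp
  have astep: "a i = (1 / (2 * G (i-1))) powr (real (p-1) / real p) * (fact p / ((real p + 1) * L)) powr (1 / real p)"
    if iin: "i \<in> {1..k}" for i
  proof -
    obtain j where ij: "i = Suc j" using iin by (cases i) auto
    have j: "j < K" using ij iin kK by simp
    show ?thesis using step_a j by (simp add: G_def ij)
  qed
  have R: "Gsum / SA \<le> D^(p+1) * 2^(p-2) * (G 0 * D / \<epsilon>) powr (real (p-1) / real k) / ((fact p / ((real p + 1) * L)) * real k powr ((real p + 1) / 2))"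
    unfolding SA_def
    by (rule final_alg[OF kK(2) p \<beta>pos eps Dpos _ _ G0 Gi astep Gk Gsum0 Gs])
       (use P1 rs_pos in auto)
  have SApos: "SA > 0" unfolding SA_def using kK P1 by (intro sum_pos) auto
  define xbar where "xbar = (1 / SA) *\<^sub>R (\<Sum>i=1..k. a i *\<^sub>R x i)"
  have xb: "xbar = (\<Sum>i=1..k. (a i / SA) *\<^sub>R x i)"
    unfolding xbar_def by (simp add: scaleR_sum_right)
  have w1: "(\<Sum>i=1..k. a i / SA) = 1" using SApos by (simp add: SA_def sum_divide_distrib[symmetric])
  have w0: "\<And>i. i \<in> {1..k} \<Longrightarrow> 0 \<le> a i / SA"
  proof -
    fix i assume "i \<in> {1..k}"
    then have "0 < a i" using P1[of i] by auto
    then show "0 \<le> a i / SA" using SApos by simp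
  qed
  have xin: "\<And>i. i \<in> {1..k} \<Longrightarrow> x i \<in> edom h"
  proof -
    fix i assume "i \<in> {1..k}"
    then have il: "i - 1 < K" "Suc (i - 1) = i" using kK by auto
    show "x i \<in> edom h" using xdom[OF il(1)] il(2) by simp
  qed
  have xbd: "xbar \<in> edom h" unfolding xb by (rule convex_sum[OF _ cvS w1 w0 xin]) auto
  have jen: "Fr xbar \<le> (\<Sum>i=1..k. (a i / SA) * Fr (x i))"
    unfolding xb using convex_on_sum[OF _ _ cvFr w1 w0 xin] kK by simp
  have "(\<Sum>i=1..k. (a i / SA) * Fr (x i)) - Fr xs = (\<Sum>i=1..k. (a i / SA) * (Fr (x i) - Fr xs))"
  proof -
    have "(\<Sum>i=1..k. (a i / SA) * (Fr (x i) - Fr xs)) = (\<Sum>i=1..k. (a i / SA) * Fr (x i)) - (\<Sum>i=1..k. a i / SA) * Fr xs"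
      by (simp add: right_diff_distrib sum_subtractf sum_distrib_right)
    then show ?thesis using w1 by simp
  qed
  also have "\<dots> = Gsum / SA" unfolding Gsum_def gp_def by (simp add: sum_divide_distrib)
  finally have J: "Fr xbar - Fr xs \<le> Gsum / SA" using jen by simp
  have fin: "D^(p+1) * 2^(p-2) * (G 0 * D / \<epsilon>) powr (real (p-1) / real k) / ((fact p / ((real p + 1) * L)) * real k powr ((real p + 1) / 2))
     = L * D ^ (p + 1) / real k powr ((real p + 1) / 2) * ((real p + 1) * 2 ^ (p - 2) * (G 0 * D / \<epsilon>) powr (real (p-1) / real k) / fact p)"
    using Lpos by (simp add: field_simps)
  have "F xbar - F xs \<le> ereal (L * D ^ (p + 1) / real k powr ((real p + 1) / 2) * ((real p + 1) * 2 ^ (p - 2) * (G 0 * D / \<epsilon>) powr (real (p-1) / real k) / fact p))"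
    unfolding Fr_eq[OF xbd] Fr_eq[OF xs(1)] using J R fin by simp
  then show "let D = Bnorm B (x 0 - xs) + (\<Sum>i=1..k. \<delta> i);
          V = (Bdnorm B (Fp 0) * D / \<epsilon>) powr (real (p - 1) / real k);
          xbar = (1 / (\<Sum>i=1..k. a i)) *\<^sub>R (\<Sum>i=1..k. a i *\<^sub>R x i)
      in F xbar - F xs \<le>
         ereal (L * D ^ (p + 1) / real k powr ((real p + 1) / 2)
                * ((real p + 1) * 2 ^ (p - 2) * V / fact p))"
    unfolding Let_def by (simp add: D_def r_def G_def xbar_def SA_def)
qed

end
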